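(* Let $a\ge 4$, $b>0$, $d>0$ with $d<b$, let $J_1,J_2$ satisfy the standing assumptions below, and assume the support of $J_2$ is contained in $[-S,S]$ for some $S\in(0,\infty)$. Let $s=s^*$ and let $\lambda_1\in(0,\hat\lambda_2)$ be the double root of $A(\lambda):=d[I_2(\lambda)-1]-s^*\lambda+b=0$ (so that $d\int_{\mathbb{R}}J_2(y)ye^{\lambda_1 y}dy=s^*$). Choose $\lambda_0\in(0,\min\{\lambda_1,\hat\lambda_1\})$ with $I_1(\lambda_0)-1-s^*\lambda_0<0$. Choose $h>\lambda_1 e$ large enough that $hze^{-\lambda_1 z}=1$ has exactly two roots $z_1<z_2$ with $0<z_1<1/\lambda_1<z_2$ and $z_2-z_1>S$. Choose $z_3>z_2$ with $he^{-\lambda_0 z_3}\le a(\lambda_1-\lambda_0)e/4$. Choose $q>0$ large enough that $z_0:=(q/h)^2>z_2$ and $$q>\frac{16bh^2\max_{z>0}\{z^2(z+S)^{3/2}e^{-\lambda_1 z}\}}{d\int_{\mathbb{R}}J_2(y)y^2e^{\lambda_1 y}dy}.$$ Let $g(z):=(hz-q\sqrt z)e^{-\lambda_1 z}$ for $z\ge0$ and let $z_M\in(z_0,\infty)$ be its unique maximum point. Fix $\delta$ with $0<\delta<\min\{g(z_M),\,1-1/a,\,\tfrac12(1-d/b)\}$, let $z_4\in(z_0,z_M)$ satisfy $g(z_4)=\delta$, and choose $$0<\varepsilon<\frac{\min\{\delta,\,hz_4-q\sqrt{z_4}\}}{1+s^*\lambda_1+a}.$$ Define $\overline\phi(z)=1-\varepsilon$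 for $z\le0$, $\overline\phi(z)=1-\varepsilon e^{-\lambda_1 z}$ for $z>0$; $\underline\phi(z)=\tfrac12$ for $z\le z_3$, $\underline\phi(z)=1-\tfrac12e^{-\lambda_0(z-z_3)}$ for $z>z_3$; $\overline\psi(z)=1$ for $z\le z_2$, $\overline\psi(z)=hze^{-\lambda_1 z}$ for $z>z_2$; $\underline\psi(z)=\delta$ for $z\le z_4$, $\underline\psi(z)=(hz-q\sqrt z)e^{-\lambda_1 z}$ for $z>z_4$. Then $(\overline\phi,\overline\psi)$ and $(\underline\phi,\underline\psi)$ are a pair of upper and lower solutions of the traveling wave system with speed $s^*$ (in the sense defined below).
   Context: Standing assumptions: for $i=1,2$, $J_i$ is nonnegative and continuous on $\mathbb{R}$, $\int_{\mathbb{R}}J_i=1$, $J_i(y)=J_i(-y)$, and there is $\hat\lambda_i\in(0,\infty]$ with $I_i(\lambda):=\int_{\mathbb{R}}J_i(y)e^{\lambda y}dy<\infty$ for $\lambda\in(0,\hat\lambda_i)$ and $I_i(\lambda)\to\infty$ as $\lambda\uparrow\hat\lambda_i$. Define $s^*:=\inf_{\lambda\in(0,\hat\lambda_2)}\frac{d[I_2(\lambda)-1]+b}{\lambda}$ (positive and attained). For a function $u$ let $\mathcal{N}_i[u](z):=\int_{\mathbb{R}}J_i(y)u(z-y)dy-u(z)$. Definition: positive continuous functions $(\overline\phi,\overline\psi)$ and $(\underline\phi,\underline\psi)$ are a pair of upper and lower solutions of the system $\mathcal{N}_1[\phi]+s\phi'+a\phi(1-\phi)-\psi=0$, $d\mathcal{N}_2[\psi]+s\psi'+b\psi(1-\psi/\phi)=0$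 if $\underline\phi\le\overline\phi$ and $\underline\psi\le\overline\psi$ on $\mathbb{R}$ and, for all $z\in\mathbb{R}\setminus E$ with $E$ some finite subset of $\mathbb{R}$: $\mathcal{N}_1[\overline\phi](z)+s\overline\phi'(z)+a\overline\phi(z)[1-\overline\phi(z)]-\underline\psi(z)\le0$; $d\mathcal{N}_2[\overline\psi](z)+s\overline\psi'(z)+b\overline\psi(z)[1-\overline\psi(z)/\overline\phi(z)]\le0$; $\mathcal{N}_1[\underline\phi](z)+s\underline\phi'(z)+a\underline\phi(z)[1-\underline\phi(z)]-\overline\psi(z)\ge0$; $d\mathcal{N}_2[\underline\psi](z)+s\underline\psi'(z)+b\underline\psi(z)[1-\underline\psi(z)/\underline\phi(z)]\ge0$. *)

theory Defs
  imports "HOL-Analysis.Analysis"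
begin

definition Imom :: "(real \<Rightarrow> real) \<Rightarrow> real \<Rightarrow> real" where
  "Imom J l = (LINT y|lborel. J y * exp (l * y))"

definition kernel_ok :: "(real \<Rightarrow> real) \<Rightarrow> ereal \<Rightarrow> bool" where
  "kernel_ok J lhat \<longleftrightarrow>
     (\<forall>y. 0 \<le> J y) \<and> continuous_on UNIV J \<and>
     integrable lborel J \<and> (LINT y|lborel. J y) = 1 \<and>
     (\<forall>y. J y = J (- y)) \<and>
     0 < lhat \<and>
     (\<forall>l. 0 < l \<and> ereal l < lhat \<longrightarrow> integrable lborel (\<lambda>y. J y * exp (l * y))) \<and>
     (if lhat = \<infinity> then filterlim (Imom J) at_top at_top
      else filterlim (Imom J) at_top (at_left (real_of_ereal lhat)))"

definition sstar :: "(real \<Rightarrow> real) \<Rightarrow> ereal \<Rightarrow> real \<Rightarrow> real \<Rightarrow> real" where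
  "sstar J2 lhat2 d b =
     Inf ((\<lambda>l. (d * (Imom J2 l - 1) + b) / l) ` {l. 0 < l \<and> ereal l < lhat2})"

definition Nop :: "(real \<Rightarrow> real) \<Rightarrow> (real \<Rightarrow> real) \<Rightarrow> real \<Rightarrow> real" where
  "Nop J u z = (LINT y|lborel. J y * u (z - y)) - u z"

definition upper_lower_pair ::
  "(real \<Rightarrow> real) \<Rightarrow> (real \<Rightarrow> real) \<Rightarrow> real \<Rightarrow> real \<Rightarrow> real \<Rightarrow> real \<Rightarrow>
   (real \<Rightarrow> real) \<Rightarrow> (real \<Rightarrow> real) \<Rightarrow> (real \<Rightarrow> real) \<Rightarrow> (real \<Rightarrow> real) \<Rightarrow> bool" where
  "upper_lower_pair J1 J2 a b d s phiU psiU phiL psiL \<longleftrightarrow>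
     continuous_on UNIV phiU \<and> continuous_on UNIV psiU \<and>
     continuous_on UNIV phiL \<and> continuous_on UNIV psiL \<and>
     (\<forall>z. 0 < phiU z \<and> 0 < psiU z \<and> 0 < phiL z \<and> 0 < psiL z) \<and>
     (\<forall>z. phiL z \<le> phiU z \<and> psiL z \<le> psiU z) \<and>
     (\<exists>E. finite E \<and> (\<forall>z. z \<notin> E \<longrightarrow>
        phiU differentiable at z \<and> psiU differentiable at z \<and>
        phiL differentiable at z \<and> psiL differentiable at z \<and>
        Nop J1 phiU z + s * deriv phiU z + a * phiU z * (1 - phiU z) - psiL z \<le> 0 \<and>
        d * Nop J2 psiU z + s * deriv psiU z + b * psiU z * (1 - psiU z / phiU z) \<le> 0 \<and>
        Nop J1 phiL z + s * deriv phiL z + a * phiL z * (1 - phiL z) - psiU z \<ge> 0 \<and>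
        d * Nop J2 psiL z + s * deriv psiL z + b * psiL z * (1 - psiL z / phiL z) \<ge> 0))"

end

theory Submission
  imports Defs "HOL-Real_Asymp.Real_Asymp"
begin

lemma kernel_facts:
  assumes "kernel_ok J lh"
  shows "\<And>y. 0 \<le> J y" "continuous_on UNIV J" "integrable lborel J" "(LINT y|lborel. J y) = 1"
    "J \<in> borel_measurable lborel"
    "\<And>l. 0 < l \<Longrightarrow> ereal l < lh \<Longrightarrow> integrable lborel (\<lambda>y. J y * exp (l * y))"
  using assms unfolding kernel_ok_def
  by (auto intro: borel_measurable_continuous_onI)

lemma cont_shift: "continuous_on UNIV u \<Longrightarrow> continuous_on UNIV (\<lambda>y::real. u (z - y))"
  by (rule continuous_on_compose2[where g=u and f="\<lambda>y. z - y" and t=UNIV]) (auto intro!: continuous_intros)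

lemma conv_integrable:
  fixes J u :: "real \<Rightarrow> real"
  assumes "integrable lborel J" "J \<in> borel_measurable lborel" "continuous_on UNIV u" "\<And>x. \<bar>u x\<bar> \<le> 1"
  shows "integrable lborel (\<lambda>y. J y * u (z - y))"
proof (rule Bochner_Integration.integrable_bound[OF assms(1)])
  have "(\<lambda>y. u (z - y)) \<in> borel_measurable lborel"
    using borel_measurable_continuous_onI[OF cont_shift[OF assms(3)]] by simp
  then show "(\<lambda>y. J y * u (z - y)) \<in> borel_measurable lborel" using assms(2) by measurable
  show "AE x in lborel. norm (J x * u (z - x)) \<le> norm (J x)"
    using assms(4) by (auto simp: abs_mult intro!: mult_left_le)
qed

lemma conv_le:
  fixes J u :: "real \<Rightarrow> real"
  assumes "integrable lborel J" "J \<in> borel_measurable lborel" "continuous_on UNIV u" "\<And>x. \<bar>u x\<bar> \<le> 1"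
    "\<And>y. 0 \<le> J y" "(LINT y|lborel. J y) = 1" "\<And>x. u x \<le> c"
  shows "(LINT y|lborel. J y * u (z - y)) \<le> c"
proof -
  have "(LINT y|lborel. J y * u (z - y)) \<le> (LINT y|lborel. J y * c)"
    by (intro integral_mono conv_integrable assms integrable_mult_left) (auto intro: mult_left_mono assms)
  also have "\<dots> = c" using assms(6) by simp
  finally show ?thesis .
qed

lemma conv_ge:
  fixes J u :: "real \<Rightarrow> real"
  assumes "integrable lborel J" "J \<in> borel_measurable lborel" "continuous_on UNIV u" "\<And>x. \<bar>u x\<bar> \<le> 1"
    "\<And>y. 0 \<le> J y" "(LINT y|lborel. J y) = 1" "\<And>x. c \<le> u x"
  shows "c \<le> (LINT y|lborel. J y * u (z - y))"
proof -
  have "(LINT y|lborel. J y * c) \<le> (LINT y|lborel. J y * u (z - y))"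
    by (intro integral_mono conv_integrable assms integrable_mult_left) (auto intro: mult_left_mono assms)
  moreover have "(LINT y|lborel. J y * c) = c" using assms(6) by simp
  ultimately show ?thesis by linarith
qed

lemma deriv_local:
  fixes f g :: "real \<Rightarrow> real"
  assumes "(g has_real_derivative D) (at x)" "open T" "x \<in> T" "\<And>y. y \<in> T \<Longrightarrow> g y = f y"
  shows "f differentiable at x" "deriv f x = D"
proof -
  have "(f has_real_derivative D) (at x)"
    by (rule has_field_derivative_transform_within_open[OF assms])
  then show "f differentiable at x" "deriv f x = D"
    by (auto simp: DERIV_imp_deriv real_differentiable_def intro: has_field_derivative_imp_has_derivative)
qed

lemma w_dec:
  fixes lam x y :: real
  assumes "0 < lam" "1 / lam \<le> x" "x \<le> y"
  shows "y * exp (- lam * y) \<le> x * exp (- lam * x)"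
proof -
  have x0: "x > 0" using assms by (metis divide_pos_pos less_le_trans zero_less_one)
  have "1 + lam * (y - x) \<le> exp (lam * (y - x))" using exp_ge_add_one_self by (metis add.commute)
  moreover have "y / x \<le> 1 + lam * (y - x)"
  proof -
    have "1 \<le> lam * x" using assms x0 by (simp add: field_simps)
    then have "(y - x) \<le> lam * x * (y - x)" using mult_right_mono[OF \<open>1 \<le> lam * x\<close>, of "y - x"] assms by simp
    then show ?thesis using x0 by (simp add: field_simps)
  qed
  ultimately have "y / x \<le> exp (lam * (y - x))" by linarith
  then have "y \<le> x * exp (lam * (y - x))" using x0 by (simp add: divide_le_eq mult.commute)
  then have "y * exp (- lam * y) \<le> x * exp (lam * (y - x)) * exp (- lam * y)" by simp
  also have "\<dots> = x * exp (- lam * x)" by (simp add: mult.assoc flip: exp_add) (simp add: algebra_simps)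
  finally show ?thesis .
qed

lemma xexp:
  fixes c z :: real
  assumes "0 < c"
  shows "z * exp (- c * z) \<le> 1 / (c * exp 1)"
proof -
  have "c * z \<le> exp (c * z - 1)" using exp_ge_add_one_self[of "c*z - 1"] by simp
  then have "c * z * exp (- c * z) \<le> exp (c * z - 1) * exp (- c * z)" by simp
  also have "\<dots> = exp (-1)" by (simp flip: exp_add)
  finally have "c * (z * exp (- c * z)) \<le> exp (-1)" by simp
  then show ?thesis using assms by (simp add: field_simps exp_minus)
qed

lemma sqrt_bound:
  fixes z y S :: real
  assumes "0 < z" "0 \<le> z - y" "\<bar>y\<bar> \<le> S"
  shows "sqrt (z - y) \<le> sqrt z - y / (2 * sqrt z) - y\<^sup>2 / (8 * ((z + S) * sqrt (z + S)))"
proof -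
  define A where "A = sqrt z"
  define B where "B = sqrt (z - y)"
  define C where "C = sqrt (z + S)"
  have A0: "A > 0" using assms A_def by simp
  have B0: "B \<ge> 0" using B_def assms(2) by simp
  have CA: "A \<le> C" unfolding A_def C_def using assms by (simp)
  have CB: "B \<le> C" unfolding B_def C_def using assms by (simp)
  have C0: "C > 0" using CA A0 by simp
  have y: "y = A^2 - B^2" using real_sqrt_pow2[of "z-y"] real_sqrt_pow2[of z] assms(1,2) A_def B_def by simp
  have zS: "z + S = C^2" using assms C_def by simp
  have "(A + B)^2 \<le> (2*C)^2" using CA CB A0 B0 by (intro power_mono) auto
  then have "(A - B)^2 * (A + B)^2 \<le> (A - B)^2 * (4 * C^2)" by (intro mult_left_mono) (auto simp: power_mult_distrib)
  then have "(A - B)^2 * (A + B)^2 / (8 * C^3) \<le> (A - B)^2 * (4 * C^2) / (8 * C^3)"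
    using C0 by (intro divide_right_mono) auto
  also have "\<dots> = (A - B)^2 / (2 * C)" using C0 by (simp add: field_simps power2_eq_square power3_eq_cube)
  also have "\<dots> \<le> (A - B)^2 / (2 * A)" using A0 CA by (intro divide_left_mono) auto
  finally have key: "(A - B)^2 * (A + B)^2 / (8 * C^3) \<le> (A - B)^2 / (2 * A)" .
  have "y\<^sup>2 / (8 * ((z + S) * sqrt (z + S))) = (A - B)^2 * (A + B)^2 / (8 * C^3)"
    unfolding y zS C_def[symmetric] using C0 by (simp add: power2_eq_square power3_eq_cube algebra_simps)
  moreover have "sqrt z - y / (2 * sqrt z) - B = (A - B)^2 / (2 * A)"
    unfolding A_def[symmetric] y using A0 by (simp add: field_simps power2_eq_square)
  ultimately show ?thesis using key B_def by simp
qed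

lemma lin3:
  fixes f1 f2 f3 :: "real \<Rightarrow> real"
  assumes "integrable lborel f1" "integrable lborel f2" "integrable lborel f3"
  shows "(LINT y|lborel. A * f1 y + B * f2 y + C * f3 y) =
     A * (LINT y|lborel. f1 y) + B * (LINT y|lborel. f2 y) + C * (LINT y|lborel. f3 y)"
  using assms by (simp add: integral_add integral_mult_right)

lemma cubic_ident:
  fixes t t0 T lam h q :: real
  shows "(T - t0) * (h*t - q/2 - lam*h*t^3 + lam*q*t^2) =
    (T - t) * (h*t0 - q/2 - lam*h*t0^3 + lam*q*t0^2) + (t - t0) * (h*T - q/2 - lam*h*T^3 + lam*q*T^2)
    + (T - t0) * (t - t0) * (t - T) * (lam * (q - h * (t + t0 + T)))"
  by algebra

lemma cubic_nonneg:
  fixes t t0 T lam h q :: real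
  assumes "h * t0 = q" "h*T - q/2 - lam*h*T^3 + lam*q*T^2 = 0" "t0 \<le> t" "t \<le> T" "t0 < T"
    "lam > 0" "h > 0" "t0 \<ge> 0"
  shows "h*t - q/2 - lam*h*t^3 + lam*q*t^2 \<ge> 0"
proof -
  have p0: "h*t0 - q/2 - lam*h*t0^3 + lam*q*t0^2 = q/2"
    using assms(1) by (simp add: power2_eq_square power3_eq_cube algebra_simps)
  have q0: "q \<ge> 0" using assms(1,7,8) by auto
  have neg: "lam * (q - h * (t + t0 + T)) \<le> 0"
  proof -
    have "q - h * (t + t0 + T) = - h * (t + T)" using assms(1) by (simp add: algebra_simps)
    also have "\<dots> \<le> 0" using assms by (simp add: mult_nonneg_nonneg)
    finally show ?thesis using assms(6) by (simp add: mult_nonneg_nonpos)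
  qed
  have "(T - t0) * (t - t0) * (t - T) \<le> 0" using assms by (simp add: mult_nonneg_nonpos)
  then have r: "(T - t0) * (t - t0) * (t - T) * (lam * (q - h * (t + t0 + T))) \<ge> 0"
    using neg by (simp add: mult_nonpos_nonpos)
  have "(T - t0) * (h*t - q/2 - lam*h*t^3 + lam*q*t^2) \<ge> 0"
    unfolding cubic_ident[of T t0 h t q lam] p0 assms(2) using r q0 assms by simp
  then show ?thesis using assms(5) by (simp add: zero_le_mult_iff)
qed

lemma G_deriv:
  fixes h q lam z :: real
  assumes "z > 0"
  shows "((\<lambda>z. (h * z - q * sqrt z) * exp (- lam * z)) has_real_derivative
          (h - q / (2 * sqrt z) - lam * (h * z - q * sqrt z)) * exp (- lam * z)) (at z)"
  using assms
  by (auto intro!: derivative_eq_intros simp: field_simps)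

lemma G_mono:
  fixes h q lam zM x y :: real
  defines "G \<equiv> \<lambda>z. (h * z - q * sqrt z) * exp (- lam * z)"
  assumes h: "h > 0" and q: "q > 0" and lam: "lam > 0" and zM: "zM > (q/h)\<^sup>2"
    and mx: "\<forall>z\<ge>0. z \<noteq> zM \<longrightarrow> G z < G zM"
    and xy: "(q/h)\<^sup>2 \<le> x" "x \<le> y" "y \<le> zM"
  shows "G x \<le> G y"
proof -
  have zM0: "zM > 0" using zM by (smt (verit) zero_le_power2)
  define T where "T = sqrt zM"
  define t0 where "t0 = q / h"
  have T0: "T > 0" using zM0 T_def by simp
  have "(h - q / (2 * sqrt zM) - lam * (h * zM - q * sqrt zM)) * exp (- lam * zM) = 0"
  proof (rule DERIV_local_max[OF G_deriv[OF zM0, of h q lam] zM0])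
    show "\<forall>y. \<bar>zM - y\<bar> < zM \<longrightarrow> (h * y - q * sqrt y) * exp (- lam * y) \<le> (h * zM - q * sqrt zM) * exp (- lam * zM)"
      using mx unfolding G_def by (metis abs_less_iff diff_less_eq less_eq_real_def add_0 add.commute order.refl less_add_same_cancel1 diff_gt_0_iff_gt)
  qed
  then have "h - q / (2 * T) - lam * (h * T^2 - q * T) = 0" using zM0 unfolding T_def by simp
  then have pT: "h*T - q/2 - lam*h*T^3 + lam*q*T^2 = 0" using T0
    by (simp add: field_simps power2_eq_square power3_eq_cube)
  have ht0: "h * t0 = q" using h t0_def by simp
  have t0T: "t0 < T" unfolding t0_def T_def using zM q h
    by (metis abs_of_pos divide_pos_pos real_less_rsqrt)
  have x0: "x > 0" using xy(1) q h by (smt (verit) divide_pos_pos zero_less_power)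
  show ?thesis unfolding G_def
  proof (rule DERIV_nonneg_imp_increasing_open[OF xy(2)])
    fix z assume z: "x < z" "z < y"
    have z0: "z > 0" using z x0 by simp
    define t where "t = sqrt z"
    have t0: "t > 0" using z0 t_def by simp
    have "t0 \<le> t" unfolding t0_def t_def using xy(1) z q h
      by (smt (verit, ccfv_SIG) divide_pos_pos real_le_rsqrt real_sqrt_abs real_sqrt_le_mono)
    moreover have "t \<le> T" unfolding t_def T_def using z xy by simp
    ultimately have pt: "h*t - q/2 - lam*h*t^3 + lam*q*t^2 \<ge> 0"
      using cubic_nonneg[OF ht0 pT _ _ t0T lam h] q h t0_def by simp
    have "h - q / (2 * t) - lam * (h * t^2 - q * t) = (h*t - q/2 - lam*h*t^3 + lam*q*t^2) / t"
      using t0 by (simp add: field_simps power2_eq_square power3_eq_cube)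
    also have "\<dots> \<ge> 0" using pt t0 by simp
    finally have "h - q / (2 * sqrt z) - lam * (h * z - q * sqrt z) \<ge> 0" using z0 t_def by simp
    then show "\<exists>D. ((\<lambda>z. (h * z - q * sqrt z) * exp (- lam * z)) has_real_derivative D) (at z) \<and> D \<ge> 0"
      using G_deriv[OF z0, of h q lam] by (intro exI[of _ "(h - q / (2 * sqrt z) - lam * (h * z - q * sqrt z)) * exp (- lam * z)"]) simp
  next
    show "continuous_on {x..y} (\<lambda>z. (h * z - q * sqrt z) * exp (- lam * z))"
      by (intro continuous_intros)
  qed
qed

lemma w_inc:
  fixes lam x y :: real
  assumes "0 < lam" "0 < x" "x \<le> y" "y \<le> 1 / lam"
  shows "x * exp (- lam * x) \<le> y * exp (- lam * y)"
proof (rule DERIV_nonneg_imp_increasing_open[OF assms(3)])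
  fix z assume z: "x < z" "z < y"
  have "lam * z \<le> lam * y" using z assms by simp
  moreover have "lam * y \<le> 1" using assms by (simp add: field_simps)
  ultimately have "lam * z \<le> 1" by simp
  then show "\<exists>D. ((\<lambda>z. z * exp (- lam * z)) has_real_derivative D) (at z) \<and> D \<ge> 0"
    by (intro exI[of _ "(1 - lam * z) * exp (- lam * z)"] conjI)
       (auto intro!: derivative_eq_intros simp: algebra_simps)
next
  show "continuous_on {x..y} (\<lambda>z. z * exp (- lam * z))" by (intro continuous_intros)
qed

lemma sup_bdd:
  fixes S lam :: real
  assumes "S > 0" "lam > 0"
  shows "bdd_above ((\<lambda>z. z\<^sup>2 * (z + S) powr (3/2) * exp (- lam * z)) ` {0<..})"
proof -
  let ?f = "\<lambda>z::real. z\<^sup>2 * (z + S) powr (3/2) * exp (- lam * z)"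
  have "(?f \<longlongrightarrow> 0) at_top" using assms by real_asymp
  then have "eventually (\<lambda>z. ?f z < 1) at_top" by (rule order_tendstoD) simp
  then obtain Z where Z: "\<And>z. z \<ge> Z \<Longrightarrow> ?f z < 1" by (auto simp: eventually_at_top_linorder)
  have "continuous_on {0..Z} ?f" using assms
    by (intro continuous_intros) auto
  then have "compact (?f ` {0..Z})" by (intro compact_continuous_image) auto
  then have "bdd_above (?f ` {0..Z})" by (intro bounded_imp_bdd_above compact_imp_bounded)
  then obtain B where "\<forall>v\<in>?f ` {0..Z}. v \<le> B" unfolding bdd_above_def by blast
  then have B: "\<And>z. z \<in> {0..Z} \<Longrightarrow> ?f z \<le> B" by blast
  show ?thesis
  proof (rule bdd_aboveI[where M = "max B 1"])
    fix v assume "v \<in> ?f ` {0<..}"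
    then obtain z where "z > 0" "v = ?f z" by auto
    then show "v \<le> max B 1" using B[of z] Z[of z] by (cases "z \<le> Z") auto
  qed
qed

lemma cont_pw:
  fixes f g :: "real \<Rightarrow> real"
  assumes "continuous_on {..c} f" "continuous_on {c..} g" "f c = g c"
  shows "continuous_on UNIV (\<lambda>x. if x \<le> c then f x else g x)"
proof -
  have "continuous_on ({..c} \<union> {c..}) (\<lambda>x. if x \<le> c then f x else g x)"
    by (rule continuous_on_cases) (use assms in auto)
  moreover have "{..c} \<union> {c..} = (UNIV :: real set)" by auto
  ultimately show ?thesis by simp
qed

lemma powr32: "(x::real) > 0 \<Longrightarrow> x powr (3/2) = x * sqrt x"
proof -
  assume x: "x > 0"
  have "x powr (3/2) = x powr (1 + 1/2)" by simp
  also have "\<dots> = x powr 1 * x powr (1/2)" by (rule powr_add)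
  also have "\<dots> = x * sqrt x" using x by (simp add: powr_half_sqrt)
  finally show ?thesis .
qed

lemma hq_pos:
  fixes h q x :: real
  assumes "h > 0" "q > 0" "x > (q/h)\<^sup>2"
  shows "h * x - q * sqrt x > 0"
proof -
  have "sqrt x > q / h" by (rule real_less_rsqrt[OF assms(3)])
  then have "h * sqrt x > q" using assms by (simp add: field_simps)
  moreover have x0: "x > 0" using assms(3) zero_le_power2[of "q/h"] by linarith
  then have sx: "sqrt x > 0" by simp
  ultimately have "sqrt x * (h * sqrt x - q) > 0" by simp
  moreover have "sqrt x * sqrt x = x" using x0 by simp
  ultimately show ?thesis by (simp add: algebra_simps)
qed

lemma hq_le0:
  fixes h q x :: real
  assumes "h > 0" "q > 0" "x \<le> (q/h)\<^sup>2" "x \<ge> 0"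
  shows "h * x - q * sqrt x \<le> 0"
proof -
  have "sqrt x \<le> sqrt ((q/h)\<^sup>2)" by (rule real_sqrt_le_mono[OF assms(3)])
  then have "sqrt x \<le> q / h" using assms by simp
  then have "h * sqrt x \<le> q" using assms by (simp add: field_simps)
  moreover have sx: "sqrt x \<ge> 0" using assms by simp
  ultimately have "sqrt x * (h * sqrt x - q) \<le> 0" by (simp add: mult_nonneg_nonpos)
  moreover have "sqrt x * sqrt x = x" using assms by simp
  ultimately show ?thesis by (simp add: algebra_simps)
qed

lemma hq_mono:
  fixes h q x y :: real
  assumes "h > 0" "q > 0" "x > (q/h)\<^sup>2" "x \<le> y"
  shows "h * x - q * sqrt x \<le> h * y - q * sqrt y"
proof -
  have "sqrt x > q / h" by (rule real_less_rsqrt[OF assms(3)])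
  then have hx: "h * sqrt x > q" using assms by (simp add: field_simps)
  have x0: "x > 0" using assms(3) zero_le_power2[of "q/h"] by linarith
  then have sx: "sqrt x \<ge> 0" by simp
  have sxy: "sqrt x \<le> sqrt y" using assms by simp
  have "h * sqrt y \<ge> 0" using sx sxy assms(1) by simp
  then have "h * (sqrt y + sqrt x) - q \<ge> 0" using hx by (simp add: algebra_simps)
  moreover have "sqrt y - sqrt x \<ge> 0" using sxy by simp
  ultimately have "0 \<le> (sqrt y - sqrt x) * (h * (sqrt y + sqrt x) - q)" by simp
  moreover have "sqrt x * sqrt x = x" "sqrt y * sqrt y = y" using x0 assms(4) by auto
  ultimately show ?thesis by (simp add: algebra_simps)
qed

theorem lemma2p4:
  fixes J1 J2 :: "real \<Rightarrow> real" and lhat1 lhat2 :: ereal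
    and a b d S s lam1 lam0 h z1 z2 z3 q zM delta z4 eps :: real
  assumes a: "a \<ge> 4" and b: "b > 0" and d: "d > 0" and db: "d < b"
    and K1: "kernel_ok J1 lhat1" and K2: "kernel_ok J2 lhat2"
    and S: "0 < S" and supp: "\<forall>y. \<bar>y\<bar> > S \<longrightarrow> J2 y = 0"
    and s: "s = sstar J2 lhat2 d b"
    and lam1: "0 < lam1" "ereal lam1 < lhat2"
    and lam1_root: "d * (Imom J2 lam1 - 1) - s * lam1 + b = 0"
    and lam1_double: "d * (LINT y|lborel. J2 y * y * exp (lam1 * y)) = s"
    and lam0: "0 < lam0" "lam0 < lam1" "ereal lam0 < lhat1"
      "Imom J1 lam0 - 1 - s * lam0 < 0"
    and h: "h > lam1 * exp 1"
    and z12: "z1 < z2" "{z. h * z * exp (- lam1 * z) = 1} = {z1, z2}"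
      "0 < z1" "z1 < 1 / lam1" "1 / lam1 < z2" "z2 - z1 > S"
    and z3: "z3 > z2" "h * exp (- lam0 * z3) \<le> a * (lam1 - lam0) * exp 1 / 4"
    and q: "q > 0" "(q / h)\<^sup>2 > z2"
      "q > 16 * b * h\<^sup>2 * (SUP z\<in>{0<..}. z\<^sup>2 * (z + S) powr (3/2) * exp (- lam1 * z))
            / (d * (LINT y|lborel. J2 y * y\<^sup>2 * exp (lam1 * y)))"
    and zM: "zM > (q / h)\<^sup>2"
      "\<forall>z\<ge>0. z \<noteq> zM \<longrightarrow>
         (h * z - q * sqrt z) * exp (- lam1 * z) < (h * zM - q * sqrt zM) * exp (- lam1 * zM)"
    and delta: "0 < delta" "delta < (h * zM - q * sqrt zM) * exp (- lam1 * zM)"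
      "delta < 1 - 1 / a" "delta < (1 - d / b) / 2"
    and z4: "(q / h)\<^sup>2 < z4" "z4 < zM" "(h * z4 - q * sqrt z4) * exp (- lam1 * z4) = delta"
    and eps: "0 < eps" "eps < min delta (h * z4 - q * sqrt z4) / (1 + s * lam1 + a)"
  shows "upper_lower_pair J1 J2 a b d s
     (\<lambda>z. if z \<le> 0 then 1 - eps else 1 - eps * exp (- lam1 * z))
     (\<lambda>z. if z \<le> z2 then 1 else h * z * exp (- lam1 * z))
     (\<lambda>z. if z \<le> z3 then 1 / 2 else 1 - exp (- lam0 * (z - z3)) / 2)
     (\<lambda>z. if z \<le> z4 then delta else (h * z - q * sqrt z) * exp (- lam1 * z))"
proof -
  define pU where "pU = (\<lambda>z::real. if z \<le> 0 then 1 - eps else 1 - eps * exp (- lam1 * z))"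
  define sU where "sU = (\<lambda>z::real. if z \<le> z2 then 1 else h * z * exp (- lam1 * z))"
  define pL where "pL = (\<lambda>z::real. if z \<le> z3 then 1 / 2 else 1 - exp (- lam0 * (z - z3)) / 2)"
  define sL where "sL = (\<lambda>z::real. if z \<le> z4 then delta else (h * z - q * sqrt z) * exp (- lam1 * z))"
  define G where "G = (\<lambda>z::real. (h * z - q * sqrt z) * exp (- lam1 * z))"
  define w where "w = (\<lambda>z::real. h * z * exp (- lam1 * z))"
  define I2 where "I2 = Imom J2 lam1"
  define M1 where "M1 = (LINT y|lborel. J2 y * y * exp (lam1 * y))"
  define M2 where "M2 = (LINT y|lborel. J2 y * y\<^sup>2 * exp (lam1 * y))"
  define I1 where "I1 = Imom J1 lam0"
  note J1 = kernel_facts[OF K1]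
  note J2 = kernel_facts[OF K2]
  have "lam1 * exp 1 > 0" using lam1(1) by simp
  then have hpos: "h > 0" using h by linarith
  have I2nn: "I2 \<ge> 0" unfolding I2_def Imom_def
    by (intro integral_nonneg_AE AE_I2) (simp add: J2(1))
  have slam: "s * lam1 = d * (I2 - 1) + b" using lam1_root unfolding I2_def by simp
  have "d * I2 \<ge> 0" using d I2nn by simp
  then have "d * (I2 - 1) + b > 0" using db by (simp add: algebra_simps)
  then have slam_pos: "s * lam1 > 0" using slam by simp
  then have s_pos: "s > 0" using lam1(1) by (simp add: zero_less_mult_iff)
  have dM1: "d * M1 = s" using lam1_double unfolding M1_def .
  have f1: "integrable lborel (\<lambda>y. J2 y * exp (lam1 * y))" using J2(6) lam1 by simp
  have J2m: "J2 \<in> borel_measurable borel" using J2(5) by simp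
  have f2: "integrable lborel (\<lambda>y. J2 y * y * exp (lam1 * y))"
  proof (rule Bochner_Integration.integrable_bound[OF integrable_mult_right[OF f1, of S]])
    show "(\<lambda>y. J2 y * y * exp (lam1 * y)) \<in> borel_measurable lborel" using J2m by measurable
    show "AE x in lborel. norm (J2 x * x * exp (lam1 * x)) \<le> norm (S * (J2 x * exp (lam1 * x)))"
    proof (intro AE_I2)
      fix x :: real
      show "norm (J2 x * x * exp (lam1 * x)) \<le> norm (S * (J2 x * exp (lam1 * x)))"
      proof (cases "\<bar>x\<bar> > S")
        case True then show ?thesis using supp by simp
      next
        case False
        then have "J2 x * \<bar>x\<bar> * exp (lam1 * x) \<le> J2 x * S * exp (lam1 * x)"
          using J2(1)[of x] by (intro mult_right_mono mult_left_mono) auto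
        then show ?thesis using J2(1)[of x] S by (simp add: abs_mult mult_ac)
      qed
    qed
  qed
  have f3: "integrable lborel (\<lambda>y. J2 y * y\<^sup>2 * exp (lam1 * y))"
  proof (rule Bochner_Integration.integrable_bound[OF integrable_mult_right[OF f1, of "S\<^sup>2"]])
    show "(\<lambda>y. J2 y * y\<^sup>2 * exp (lam1 * y)) \<in> borel_measurable lborel" using J2m by measurable
    show "AE x in lborel. norm (J2 x * x\<^sup>2 * exp (lam1 * x)) \<le> norm (S\<^sup>2 * (J2 x * exp (lam1 * x)))"
    proof (intro AE_I2)
      fix x :: real
      show "norm (J2 x * x\<^sup>2 * exp (lam1 * x)) \<le> norm (S\<^sup>2 * (J2 x * exp (lam1 * x)))"
      proof (cases "\<bar>x\<bar> > S")
        case True then show ?thesis using supp by simp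
      next
        case False
        then have "\<bar>x\<bar>\<^sup>2 \<le> S\<^sup>2" by (intro power_mono) auto
        then have "x\<^sup>2 \<le> S\<^sup>2" by simp
        then have "J2 x * x\<^sup>2 * exp (lam1 * x) \<le> J2 x * S\<^sup>2 * exp (lam1 * x)"
          using J2(1)[of x] by (intro mult_right_mono mult_left_mono) auto
        then show ?thesis using J2(1)[of x] S by (simp add: abs_mult mult_ac)
      qed
    qed
  qed
  have g1: "integrable lborel (\<lambda>y. J1 y * exp (lam0 * y))" using J1(6) lam0 by simp
  have M2pos: "M2 > 0"
  proof -
    have nn: "AE y in lborel. 0 \<le> J2 y * y\<^sup>2 * exp (lam1 * y)" using J2(1) by (auto intro!: AE_I2)
    have "M2 \<ge> 0" unfolding M2_def using nn by (rule integral_nonneg_AE)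
    moreover have "M2 \<noteq> 0"
    proof
      assume "M2 = 0"
      then have "AE y in lborel. J2 y * y\<^sup>2 * exp (lam1 * y) = 0"
        using integral_nonneg_eq_0_iff_AE[OF f3 nn] unfolding M2_def by simp
      then have ae0: "AE y in lborel. J2 y = 0" using AE_lborel_singleton[of "0::real"]
        by eventually_elim simp
      have "(LINT y|lborel. J2 y) = 0" using integral_eq_zero_AE[OF ae0] by simp
      then show False using J2(4) by simp
    qed
    ultimately show ?thesis by simp
  qed
  have qkey: "16 * b * h\<^sup>2 * (z\<^sup>2 * ((z + S) * sqrt (z + S)) * exp (- lam1 * z)) \<le> q * (d * M2)"
    if z: "z > 0" for z
  proof -
    let ?SUP = "(SUP z\<in>{0<..}. z\<^sup>2 * (z + S) powr (3/2) * exp (- lam1 * z))"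
    have "z\<^sup>2 * (z + S) powr (3/2) * exp (- lam1 * z) \<le> ?SUP"
      using z by (intro cSUP_upper sup_bdd S lam1(1)) auto
    then have "z\<^sup>2 * ((z + S) * sqrt (z + S)) * exp (- lam1 * z) \<le> ?SUP"
      using powr32[of "z + S"] z S by simp
    moreover have "16 * b * h\<^sup>2 * ?SUP < q * (d * M2)"
      using q(3) M2pos d unfolding M2_def by (simp add: divide_less_eq)
    moreover have "16 * b * h\<^sup>2 \<ge> 0" using b by simp
    ultimately show ?thesis by (meson less_imp_le mult_left_mono order_trans)
  qed
  have z4S: "z4 > S" "z4 > z2" using z4(1) q(2) z12(1,3,6) by linarith+
  have z2pos: "z2 > 0" using z12(1,3) by simp
  have wz1: "w z1 = 1" and wz2: "w z2 = 1" using z12(2) unfolding w_def by blast+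
  have w_le1: "w x < 1" if "x > z2" for x
  proof -
    have "x * exp (- lam1 * x) \<le> z2 * exp (- lam1 * z2)"
      by (rule w_dec) (use lam1 z12(5) that in auto)
    then have "w x \<le> w z2" unfolding w_def using hpos by (simp add: mult.assoc)
    moreover have "w x \<noteq> 1"
    proof
      assume "w x = 1"
      then have "x \<in> {z. h * z * exp (- lam1 * z) = 1}" unfolding w_def by simp
      then have "x \<in> {z1, z2}" using z12(2) by blast
      then show False using z12(1) that by auto
    qed
    ultimately show ?thesis using wz2 by simp
  qed
  have w_ge1: "w x \<ge> 1" if "z1 \<le> x" "x \<le> z2" for x
  proof (cases "x \<le> 1 / lam1")
    case True
    have "z1 * exp (- lam1 * z1) \<le> x * exp (- lam1 * x)"
      by (rule w_inc) (use lam1 z12 that True in auto)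
    then have "w z1 \<le> w x" unfolding w_def using hpos by (simp add: mult.assoc)
    then show ?thesis using wz1 by simp
  next
    case False
    have "z2 * exp (- lam1 * z2) \<le> x * exp (- lam1 * x)"
      by (rule w_dec) (use lam1 z12 that False in auto)
    then have "w z2 \<le> w x" unfolding w_def using hpos by (simp add: mult.assoc)
    then show ?thesis using wz2 by simp
  qed
  have sU_le1: "sU x \<le> 1" for x
    using w_le1[of x] unfolding sU_def w_def by auto
  have sU_pos: "sU x > 0" for x
    unfolding sU_def using hpos z2pos by auto
  have sU_w: "sU x \<le> w x" if "z1 \<le> x" for x
    using w_ge1[of x] that unfolding sU_def w_def by auto
  have Gz4: "G z4 = delta" using z4(3) unfolding G_def .
  have G_le_w: "G x \<le> w x" if "x \<ge> 0" for x
    unfolding G_def w_def using q(1) that by (simp add: algebra_simps mult_right_mono)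
  have G_pos: "G x > 0" if "x > z4" for x
    unfolding G_def using hq_pos[OF hpos q(1), of x] that z4(1) by simp
  have sL_G: "G x \<le> sL x" if "x > 0" for x
  proof (cases "x \<le> z4")
    case True
    show ?thesis
    proof (cases "x \<le> (q/h)\<^sup>2")
      case True
      then have "h * x - q * sqrt x \<le> 0" using hq_le0[OF hpos q(1)] that by simp
      then have "G x \<le> 0" unfolding G_def by (simp add: mult_nonpos_nonneg)
      then show ?thesis unfolding sL_def using \<open>x \<le> z4\<close> delta(1) by simp
    next
      case False
      have "G x \<le> G z4" unfolding G_def
        by (rule G_mono[OF hpos q(1) lam1(1) zM(1)]) (use zM(2) False \<open>x \<le> z4\<close> z4(2) in \<open>auto simp: G_def\<close>)
      then show ?thesis unfolding sL_def using \<open>x \<le> z4\<close> Gz4 by simp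
    qed
  next
    case False then show ?thesis unfolding sL_def G_def by simp
  qed
  have sL_pos: "sL x > 0" for x
    unfolding sL_def using G_pos[of x] delta(1) unfolding G_def by auto
  have sL_le_sU: "sL x \<le> sU x" for x
  proof (cases "x \<le> z4")
    case True
    show ?thesis
    proof (cases "x \<le> z2")
      case True
      have "1 / a > 0" using a by simp
      then have "delta \<le> 1" using delta(3) by linarith
      then show ?thesis unfolding sL_def sU_def using \<open>x \<le> z4\<close> True by simp
    next
      case False
      have "z4 * exp (- lam1 * z4) \<le> x * exp (- lam1 * x)"
        by (rule w_dec) (use lam1 z12 False \<open>x \<le> z4\<close> in auto)
      then have "w z4 \<le> w x" unfolding w_def using hpos by (simp add: mult.assoc)
      moreover have "G z4 \<le> w z4" using G_le_w[of z4] z4S S by simp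
      ultimately show ?thesis unfolding sL_def sU_def using Gz4 False \<open>x \<le> z4\<close> by (simp add: w_def)
    qed
  next
    case False
    then have "G x \<le> w x" using G_le_w[of x] z4S S by simp
    then show ?thesis using False z4S unfolding sL_def sU_def G_def w_def by auto
  qed
  have sL_le1: "sL x \<le> 1" for x using sL_le_sU[of x] sU_le1[of x] by simp
  have den_pos: "1 + s * lam1 + a > 0" using s_pos lam1 a by (simp add: add_pos_nonneg)
  have eps_d: "eps * (1 + s * lam1 + a) < delta" "eps * (1 + s * lam1 + a) < h * z4 - q * sqrt z4"
    using eps(2) den_pos by (simp_all add: less_divide_eq)
  have eps_half: "eps < 1 / 2"
  proof -
    have "eps * (1 + s * lam1 + a) \<ge> eps * 1" using eps(1) s_pos lam1 a
      by (intro mult_left_mono) (auto simp: add_nonneg_nonneg)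
    moreover have "1 / a > 0" using a by simp
    then have "delta < 1" using delta(3) by linarith
    ultimately have "eps < 1" using eps_d by linarith
    moreover have "eps * 5 \<le> eps * (1 + s * lam1 + a)" using eps(1) slam_pos a
      by (intro mult_left_mono) (auto)
    ultimately show ?thesis using eps_d \<open>delta < 1\<close> by linarith
  qed
  have pU_le1: "pU x \<le> 1" for x unfolding pU_def using eps(1) by auto
  have pU_ge: "pU x \<ge> 1 - eps" for x
  proof -
    have "x > 0 \<Longrightarrow> eps * exp (- lam1 * x) \<le> eps" using eps(1) lam1(1) by (simp add: mult_left_le)
    then show ?thesis unfolding pU_def by auto
  qed
  have pU_pos: "pU x > 0" for x using pU_ge[of x] eps_half by simp
  have pL_half: "pL x \<ge> 1/2" for x
  proof -
    have "x > z3 \<Longrightarrow> exp (- lam0 * (x - z3)) \<le> 1" using lam0(1) by (simp add: mult_nonneg_nonneg)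
    then show ?thesis unfolding pL_def by auto
  qed
  have pL_pos: "pL x > 0" for x using pL_half[of x] by simp
  have pL_le1: "pL x \<le> 1" for x unfolding pL_def by auto
  have pL_lb: "pL x \<ge> 1 - exp (- lam0 * (x - z3)) / 2" for x
  proof (cases "x \<le> z3")
    case True
    then have "lam0 * (x - z3) \<le> 0" using lam0(1) by (simp add: mult_nonneg_nonpos)
    then have "exp (- lam0 * (x - z3)) \<ge> 1" by simp
    then show ?thesis unfolding pL_def using True by simp
  qed (simp add: pL_def)
  have pL_le_pU: "pL x \<le> pU x" for x
  proof (cases "x \<le> z3")
    case True then show ?thesis using pU_ge[of x] eps_half unfolding pL_def by simp
  next
    case False
    then have x0: "x > 0" using z3(1) z2pos by simp
    have "lam0 * x \<le> lam1 * x" using lam0 x0 by (simp add: mult_right_mono)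
    moreover have "lam0 * z3 \<ge> 0" using lam0 z3(1) z2pos by simp
    ultimately have e1: "exp (- lam1 * x) \<le> exp (- lam0 * (x - z3))"
      by (simp add: algebra_simps)
    have e2: "eps * exp (- lam1 * x) \<le> exp (- lam1 * x) / 2" using eps_half by simp
    have "eps * exp (- lam1 * x) \<le> exp (- lam0 * (x - z3)) / 2" using e1 e2 by linarith
    then show ?thesis unfolding pL_def pU_def using False x0 by simp
  qed
  have cpU: "continuous_on UNIV pU" unfolding pU_def
    by (rule cont_pw) (auto intro!: continuous_intros)
  have csU: "continuous_on UNIV sU" unfolding sU_def
    by (rule cont_pw) (use wz2 in \<open>auto intro!: continuous_intros simp: w_def\<close>)
  have cpL: "continuous_on UNIV pL" unfolding pL_def
    by (rule cont_pw) (auto intro!: continuous_intros)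
  have csL: "continuous_on UNIV sL" unfolding sL_def
    by (rule cont_pw) (use Gz4 in \<open>auto intro!: continuous_intros simp: G_def\<close>)
  have apU: "\<bar>pU x\<bar> \<le> 1" for x using pU_pos[of x] pU_le1[of x] by (simp add: abs_le_iff)
  have asU: "\<bar>sU x\<bar> \<le> 1" for x using sU_pos[of x] sU_le1[of x] by (simp add: abs_le_iff)
  have apL: "\<bar>pL x\<bar> \<le> 1" for x using pL_half[of x] pL_le1[of x] by (simp add: abs_le_iff)
  have asL: "\<bar>sL x\<bar> \<le> 1" for x using sL_pos[of x] sL_le1[of x] by (simp add: abs_le_iff)
  have main: "pU differentiable at z \<and> sU differentiable at z \<and>
        pL differentiable at z \<and> sL differentiable at z \<and>
        Nop J1 pU z + s * deriv pU z + a * pU z * (1 - pU z) - sL z \<le> 0 \<and>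
        d * Nop J2 sU z + s * deriv sU z + b * sU z * (1 - sU z / pU z) \<le> 0 \<and>
        Nop J1 pL z + s * deriv pL z + a * pL z * (1 - pL z) - sU z \<ge> 0 \<and>
        d * Nop J2 sL z + s * deriv sL z + b * sL z * (1 - sL z / pL z) \<ge> 0"
    if zE: "z \<notin> {0, z2, z3, z4}" for z
  proof -
    define E where "E = exp (- lam1 * z)"
    have E0: "E > 0" unfolding E_def by simp
    have dpU: "pU differentiable at z \<and> deriv pU z = (if z < 0 then 0 else eps * lam1 * E)"
    proof (cases "z < 0")
      case True
      have D: "((\<lambda>_. 1 - eps) has_real_derivative 0) (at z)" by (rule DERIV_const)
      show ?thesis using deriv_local[OF D open_lessThan[of 0], of pU] True by (auto simp: pU_def)
    next
      case False
      then have z0: "z > 0" using zE by auto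
      have D: "((\<lambda>z. 1 - eps * exp (- lam1 * z)) has_real_derivative eps * lam1 * E) (at z)"
        unfolding E_def by (auto intro!: derivative_eq_intros simp: algebra_simps)
      show ?thesis using deriv_local[OF D open_greaterThan[of 0], of pU] z0 by (auto simp: pU_def)
    qed
    have dsU: "sU differentiable at z \<and> deriv sU z = (if z < z2 then 0 else h * E - lam1 * (h * z * E))"
    proof (cases "z < z2")
      case True
      have D: "((\<lambda>_. 1) has_real_derivative 0) (at z)" by (rule DERIV_const)
      show ?thesis using deriv_local[OF D open_lessThan[of z2], of sU] True by (auto simp: sU_def)
    next
      case False
      then have z0: "z > z2" using zE by auto
      have D: "((\<lambda>z. h * z * exp (- lam1 * z)) has_real_derivative h * E - lam1 * (h * z * E)) (at z)"
        unfolding E_def by (auto intro!: derivative_eq_intros simp: algebra_simps)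
      show ?thesis using deriv_local[OF D open_greaterThan[of z2], of sU] z0 by (auto simp: sU_def)
    qed
    have dpL: "pL differentiable at z \<and> deriv pL z = (if z < z3 then 0 else lam0 * exp (- lam0 * (z - z3)) / 2)"
    proof (cases "z < z3")
      case True
      have D: "((\<lambda>_. 1 / 2) has_real_derivative 0) (at z)" by (rule DERIV_const)
      show ?thesis using deriv_local[OF D open_lessThan[of z3], of pL] True by (auto simp: pL_def)
    next
      case False
      then have z0: "z > z3" using zE by auto
      have D: "((\<lambda>z. 1 - exp (- lam0 * (z - z3)) / 2) has_real_derivative lam0 * exp (- lam0 * (z - z3)) / 2) (at z)"
        by (auto intro!: derivative_eq_intros simp: algebra_simps)
      show ?thesis using deriv_local[OF D open_greaterThan[of z3], of pL] z0 by (auto simp: pL_def)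
    qed
    have dsL: "sL differentiable at z \<and> deriv sL z = (if z < z4 then 0 else (h - q / (2 * sqrt z) - lam1 * (h * z - q * sqrt z)) * E)"
    proof (cases "z < z4")
      case True
      have D: "((\<lambda>_. delta) has_real_derivative 0) (at z)" by (rule DERIV_const)
      show ?thesis using deriv_local[OF D open_lessThan[of z4], of sL] True by (auto simp: sL_def)
    next
      case False
      then have z0: "z > z4" using zE by auto
      then have "z > 0" using z4S S by simp
      note D = G_deriv[OF this, of h q lam1]
      show ?thesis using deriv_local[OF D open_greaterThan[of z4], of sL] z0 by (auto simp: sL_def E_def)
    qed
    have ineq1: "Nop J1 pU z + s * deriv pU z + a * pU z * (1 - pU z) - sL z \<le> 0"
    proof -
      have N: "Nop J1 pU z \<le> 1 - pU z"
        using conv_le[OF J1(3) J1(5) cpU apU J1(1) J1(4) pU_le1, of z] unfolding Nop_def by simp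
      have esl: "eps * (s * lam1) > 0" using eps(1) slam_pos by simp
      have den: "eps * (1 + s * lam1 + a) = eps + eps * (s * lam1) + a * eps" by (simp add: algebra_simps)
      show ?thesis
      proof (cases "z < 0")
        case True
        then have pz: "pU z = 1 - eps" and sz: "sL z = delta" and dz: "deriv pU z = 0"
          using dpU z4S S unfolding pU_def sL_def by auto
        have t1: "a * pU z * (1 - pU z) = a * eps - a * (eps * eps)" unfolding pz by (simp add: algebra_simps)
        have t2: "a * (eps * eps) \<ge> 0" using a by simp
        have t3: "s * deriv pU z = 0" using dz by simp
        show ?thesis using N pz sz t1 t2 t3 eps_d(1) esl den by linarith
      next
        case False
        then have z0: "z > 0" using zE by auto
        have E1: "E \<le> 1" unfolding E_def using lam1(1) z0 by simp
        have pz: "pU z = 1 - eps * E" and dz: "deriv pU z = eps * lam1 * E"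
          using dpU z0 unfolding pU_def E_def by auto
        have t1: "a * pU z * (1 - pU z) = a * (eps * E) - a * ((eps * E) * (eps * E))"
          unfolding pz by (simp add: algebra_simps)
        have t2: "a * ((eps * E) * (eps * E)) \<ge> 0" using a by simp
        have t3: "s * deriv pU z = (eps * E) * (s * lam1)" unfolding dz by (simp add: algebra_simps)
        have N': "Nop J1 pU z \<le> eps * E" using N pz by simp
        have den': "E * (eps * (1 + s * lam1 + a)) = eps * E + (eps * E) * (s * lam1) + a * (eps * E)"
          by (simp add: algebra_simps)
        have "Nop J1 pU z + s * deriv pU z + a * pU z * (1 - pU z) \<le> E * (eps * (1 + s * lam1 + a))"
          using t1 t2 t3 N' den' by linarith
        also have "\<dots> \<le> sL z"
        proof (cases "z < z4")
          case True
          then have "sL z = delta" unfolding sL_def by simp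
          moreover have "E * (eps * (1 + s * lam1 + a)) \<le> 1 * (eps * (1 + s * lam1 + a))"
            using E1 eps(1) den_pos by (intro mult_right_mono) auto
          ultimately show ?thesis using eps_d(1) by simp
        next
          case False
          then have zz: "z > z4" using zE by auto
          then have "sL z = E * (h * z - q * sqrt z)" unfolding sL_def E_def by simp
          moreover have "h * z4 - q * sqrt z4 \<le> h * z - q * sqrt z"
            using hq_mono[OF hpos q(1) z4(1)] zz by simp
          ultimately show ?thesis using eps_d(2) E0 by simp
        qed
        finally show ?thesis by simp
      qed
    qed
    have ineq2: "d * Nop J2 sU z + s * deriv sU z + b * sU z * (1 - sU z / pU z) \<le> 0"
    proof (cases "z < z2")
      case True
      have N: "Nop J2 sU z \<le> 1 - sU z"
        using conv_le[OF J2(3) J2(5) csU asU J2(1) J2(4) sU_le1, of z] unfolding Nop_def by simp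
      have sz: "sU z = 1" and dz: "deriv sU z = 0" using True dsU unfolding sU_def by auto
      have t1: "d * Nop J2 sU z \<le> 0" using N sz d by (simp add: mult_nonneg_nonpos)
      have "1 / pU z \<ge> 1" using pU_pos[of z] pU_le1[of z] by simp
      then have t2: "b * sU z * (1 - sU z / pU z) \<le> 0" unfolding sz using b by (simp add: mult_nonneg_nonpos)
      have t3: "s * deriv sU z = 0" unfolding dz by simp
      show ?thesis using t1 t2 t3 by linarith
    next
      case False
      then have zz: "z > z2" using zE by auto
      have sz: "sU z = h * z * E" and dz: "deriv sU z = h * E - lam1 * (h * z * E)"
        using zz dsU unfolding sU_def E_def by auto
      have "(LINT y|lborel. J2 y * sU (z - y)) \<le>
         (LINT y|lborel. (h * z * E) * (J2 y * exp (lam1 * y)) + (- h * E) * (J2 y * y * exp (lam1 * y)) + 0 * (J2 y * y\<^sup>2 * exp (lam1 * y)))"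
      proof (rule integral_mono)
        show "integrable lborel (\<lambda>y. J2 y * sU (z - y))" by (rule conv_integrable[OF J2(3) J2(5) csU asU])
        show "integrable lborel (\<lambda>y. (h * z * E) * (J2 y * exp (lam1 * y)) + (- h * E) * (J2 y * y * exp (lam1 * y)) + 0 * (J2 y * y\<^sup>2 * exp (lam1 * y)))"
          using f1 f2 f3 by simp
        fix y :: real
        have ex: "exp (- lam1 * (z - y)) = E * exp (lam1 * y)" unfolding E_def by (simp add: algebra_simps flip: exp_add)
        have rhs: "(h * z * E) * (J2 y * exp (lam1 * y)) + (- h * E) * (J2 y * y * exp (lam1 * y)) + 0 * (J2 y * y\<^sup>2 * exp (lam1 * y))
            = J2 y * w (z - y)" unfolding w_def ex by (simp add: algebra_simps)
        show "J2 y * sU (z - y) \<le> (h * z * E) * (J2 y * exp (lam1 * y)) + (- h * E) * (J2 y * y * exp (lam1 * y)) + 0 * (J2 y * y\<^sup>2 * exp (lam1 * y))"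
          unfolding rhs
        proof (cases "\<bar>y\<bar> > S")
          case True then show "J2 y * sU (z - y) \<le> J2 y * w (z - y)" using supp by simp
        next
          case False
          then have "z1 \<le> z - y" using zz z12(6) by simp
          then show "J2 y * sU (z - y) \<le> J2 y * w (z - y)" using sU_w J2(1)[of y] by (simp add: mult_left_mono)
        qed
      qed
      also have "\<dots> = (h * z * E) * I2 + (- h * E) * M1 + 0 * M2"
        unfolding I2_def Imom_def M1_def M2_def by (rule lin3[OF f1 f2 f3])
      finally have N: "Nop J2 sU z \<le> (h * z * E) * I2 - (h * E) * M1 - h * z * E" unfolding Nop_def sz by simp
      have t1: "d * Nop J2 sU z \<le> d * ((h * z * E) * I2 - (h * E) * M1 - h * z * E)"
        using N d by (simp add: mult_left_mono)
      have "sU z / pU z \<ge> 0" using sU_pos[of z] pU_pos[of z] by simp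
      then have "b * sU z * (sU z / pU z) \<ge> 0" using b sU_pos[of z] by (intro mult_nonneg_nonneg) auto
      then have t2: "b * sU z * (1 - sU z / pU z) \<le> b * (h * z * E)" unfolding sz by (simp add: algebra_simps)
      have t3: "s * deriv sU z = s * (h * E - lam1 * (h * z * E))" unfolding dz by simp
      have id: "d * ((h * z * E) * I2 - (h * E) * M1 - h * z * E) + s * (h * E - lam1 * (h * z * E)) + b * (h * z * E)
          = (h * z * E) * (d * (I2 - 1) - s * lam1 + b) - (h * E) * (d * M1 - s)" by (simp add: algebra_simps)
      have "d * (I2 - 1) - s * lam1 + b = 0" using slam by simp
      then have "d * ((h * z * E) * I2 - (h * E) * M1 - h * z * E) + s * (h * E - lam1 * (h * z * E)) + b * (h * z * E) = 0"
        unfolding id dM1 by simp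
      then show ?thesis using t1 t2 t3 by linarith
    qed
    have ineq3: "Nop J1 pL z + s * deriv pL z + a * pL z * (1 - pL z) - sU z \<ge> 0"
    proof (cases "z < z3")
      case True
      have N: "Nop J1 pL z \<ge> 1/2 - pL z"
        using conv_ge[OF J1(3) J1(5) cpL apL J1(1) J1(4) pL_half, of z] unfolding Nop_def by simp
      have pz: "pL z = 1/2" and dz: "deriv pL z = 0" using True dpL unfolding pL_def by auto
      have t1: "a * pL z * (1 - pL z) = a / 4" unfolding pz by simp
      have t3: "s * deriv pL z = 0" unfolding dz by simp
      show ?thesis using N pz t1 t3 sU_le1[of z] a by linarith
    next
      case False
      then have zz: "z > z3" using zE by auto
      define u where "u = exp (- lam0 * (z - z3)) / 2"
      have u0: "u > 0" unfolding u_def by simp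
      have uh: "u \<le> 1/2" unfolding u_def using zz lam0(1) by (simp add: mult_nonneg_nonneg)
      have pz: "pL z = 1 - u" and dz: "deriv pL z = lam0 * u" using zz dpL unfolding pL_def u_def by auto
      have sz: "sU z = w z" using zz z3(1) unfolding sU_def w_def by simp
      have intJ1: "(LINT y|lborel. J1 y) = 1" by (rule J1(4))
      have "(LINT y|lborel. 1 * J1 y + (- u) * (J1 y * exp (lam0 * y)) + 0 * J1 y) \<le> (LINT y|lborel. J1 y * pL (z - y))"
      proof (rule integral_mono)
        show "integrable lborel (\<lambda>y. 1 * J1 y + (- u) * (J1 y * exp (lam0 * y)) + 0 * J1 y)"
          using J1(3) g1 by simp
        show "integrable lborel (\<lambda>y. J1 y * pL (z - y))" by (rule conv_integrable[OF J1(3) J1(5) cpL apL])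
        fix y
        have "exp (- lam0 * (z - y - z3)) = exp (- lam0 * (z - z3)) * exp (lam0 * y)"
          by (simp add: algebra_simps flip: exp_add)
        then have "pL (z - y) \<ge> 1 - u * exp (lam0 * y)" using pL_lb[of "z - y"] unfolding u_def by simp
        then have "J1 y * (1 - u * exp (lam0 * y)) \<le> J1 y * pL (z - y)" using J1(1)[of y] by (rule mult_left_mono)
        then show "1 * J1 y + (- u) * (J1 y * exp (lam0 * y)) + 0 * J1 y \<le> J1 y * pL (z - y)"
          by (simp add: algebra_simps)
      qed
      also have "(LINT y|lborel. 1 * J1 y + (- u) * (J1 y * exp (lam0 * y)) + 0 * J1 y) = 1 - u * I1"
        using lin3[OF J1(3) g1 J1(3), of 1 "- u" 0] intJ1 unfolding I1_def Imom_def by simp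
      finally have N: "Nop J1 pL z \<ge> u - u * I1" unfolding Nop_def using pz by simp
      have key: "w z \<le> a * u / 2"
      proof -
        define c where "c = lam1 - lam0"
        have c0: "c > 0" unfolding c_def using lam0 by simp
        have "exp (- lam1 * z) = exp (- c * z) * exp (- lam0 * z3) * exp (- lam0 * (z - z3))"
          unfolding c_def by (simp add: algebra_simps flip: exp_add)
        then have "w z = (h * exp (- lam0 * z3)) * (z * exp (- c * z)) * exp (- lam0 * (z - z3))"
          unfolding w_def by (simp add: mult_ac)
        also have "\<dots> \<le> (a * c * exp 1 / 4) * (1 / (c * exp 1)) * exp (- lam0 * (z - z3))"
        proof (intro mult_right_mono mult_mono)
          show "h * exp (- lam0 * z3) \<le> a * c * exp 1 / 4" using z3(2) unfolding c_def .
          show "z * exp (- c * z) \<le> 1 / (c * exp 1)" by (rule xexp[OF c0])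
          show "0 \<le> a * c * exp 1 / 4" using a c0 by simp
          show "0 \<le> z * exp (- c * z)" using zz z3(1) z2pos by simp
        qed simp
        also have "\<dots> = a * u / 2" unfolding u_def using c0 by (simp add: field_simps)
        finally show ?thesis .
      qed
      have au: "a * (1 - u) * u \<ge> a * u / 2"
      proof -
        have "a * u * (1 - u) \<ge> a * u * (1/2)" using a u0 uh by (intro mult_left_mono) auto
        then show ?thesis by (simp add: mult_ac)
      qed
      have "u * (1 - I1 + s * lam0) \<ge> 0" using u0 lam0(4) unfolding I1_def by simp
      moreover have "a * pL z * (1 - pL z) = a * (1 - u) * u" unfolding pz by simp
      moreover have "s * deriv pL z = u * (s * lam0)" unfolding dz by simp
      moreover have "u * (1 - I1 + s * lam0) = u - u * I1 + u * (s * lam0)" by (simp add: algebra_simps)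
      ultimately show ?thesis using N pz sz key au by linarith
    qed
    have ineq4: "d * Nop J2 sL z + s * deriv sL z + b * sL z * (1 - sL z / pL z) \<ge> 0"
    proof (cases "z < z4")
      case True
      have N: "Nop J2 sL z \<ge> 0 - sL z"
        using conv_ge[OF J2(3) J2(5) csL asL J2(1) J2(4), of 0 z] sL_pos unfolding Nop_def by (simp add: less_imp_le)
      have sz: "sL z = delta" and dz: "deriv sL z = 0" using True dsL unfolding sL_def by auto
      have "- delta \<le> Nop J2 sL z" using N sz by simp
      then have t1: "d * Nop J2 sL z \<ge> d * (- delta)" using d by (intro mult_left_mono) auto
      have "delta / pL z \<le> delta / (1/2)" using pL_half[of z] delta(1) by (intro divide_left_mono) auto
      then have "1 - delta / pL z \<ge> 1 - 2 * delta" by simp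
      then have t2: "b * sL z * (1 - sL z / pL z) \<ge> (b * delta) * (1 - 2 * delta)" unfolding sz
        using b delta(1) by (intro mult_left_mono) auto
      have t3: "s * deriv sL z = 0" unfolding dz by simp
      have "2 * delta < 1 - d / b" using delta(4) by simp
      then have "b * (2 * delta) < b * (1 - d / b)" using b by simp
      then have "b * (1 - 2 * delta) > d" using b by (simp add: algebra_simps)
      then have "delta * (b * (1 - 2 * delta)) \<ge> delta * d" using delta(1) by simp
      moreover have "(b * delta) * (1 - 2 * delta) = delta * (b * (1 - 2 * delta))" by (simp add: algebra_simps)
      moreover have "d * (- delta) = - (delta * d)" by simp
      ultimately show ?thesis using t1 t2 t3 by linarith
    next
      case False
      then have zz: "z > z4" using zE by auto
      have z0: "z > 0" using zz z4S S by simp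
      define sq where "sq = sqrt z"
      define c3 where "c3 = (z + S) * sqrt (z + S)"
      have sq0: "sq > 0" unfolding sq_def using z0 by simp
      have c30: "c3 > 0" unfolding c3_def using z0 S by simp
      define A where "A = E * (h * z - q * sq)"
      define B where "B = E * (- h + q / (2 * sq))"
      define C where "C = E * q / (8 * c3)"
      have sz: "sL z = A" and dz: "deriv sL z = (h - q / (2 * sq) - lam1 * (h * z - q * sq)) * E"
        using zz dsL unfolding sL_def A_def E_def sq_def by (auto simp: mult_ac)
      have A0: "A > 0" using sL_pos[of z] sz by simp
      have "(LINT y|lborel. A * (J2 y * exp (lam1 * y)) + B * (J2 y * y * exp (lam1 * y)) + C * (J2 y * y\<^sup>2 * exp (lam1 * y)))
          \<le> (LINT y|lborel. J2 y * sL (z - y))"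
      proof (rule integral_mono)
        show "integrable lborel (\<lambda>y. J2 y * sL (z - y))" by (rule conv_integrable[OF J2(3) J2(5) csL asL])
        show "integrable lborel (\<lambda>y. A * (J2 y * exp (lam1 * y)) + B * (J2 y * y * exp (lam1 * y)) + C * (J2 y * y\<^sup>2 * exp (lam1 * y)))"
          using f1 f2 f3 by simp
        fix y :: real
        define ey where "ey = exp (lam1 * y)"
        have ey0: "ey > 0" unfolding ey_def by simp
        have ex: "exp (- lam1 * (z - y)) = E * ey" unfolding E_def ey_def by (simp add: algebra_simps flip: exp_add)
        define Q where "Q = h * (z - y) - q * (sq - y / (2 * sq) - y\<^sup>2 / (8 * c3))"
        have rhs: "A * (J2 y * exp (lam1 * y)) + B * (J2 y * y * exp (lam1 * y)) + C * (J2 y * y\<^sup>2 * exp (lam1 * y))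
            = J2 y * ((E * ey) * Q)"
          unfolding A_def B_def C_def Q_def ey_def[symmetric] using sq0 c30
          by (simp add: field_simps)
        show "A * (J2 y * exp (lam1 * y)) + B * (J2 y * y * exp (lam1 * y)) + C * (J2 y * y\<^sup>2 * exp (lam1 * y)) \<le> J2 y * sL (z - y)"
          unfolding rhs
        proof (cases "\<bar>y\<bar> > S")
          case True then show "J2 y * ((E * ey) * Q) \<le> J2 y * sL (z - y)" using supp by simp
        next
          case False
          then have zy: "z - y > 0" using zz z4S by simp
          have "sqrt (z - y) \<le> sq - y / (2 * sq) - y\<^sup>2 / (8 * c3)"
            unfolding sq_def c3_def using sqrt_bound[of z y S] z0 zy False by simp
          then have "q * sqrt (z - y) \<le> q * (sq - y / (2 * sq) - y\<^sup>2 / (8 * c3))" using q(1) by (simp add: mult_left_mono)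
          then have "Q \<le> h * (z - y) - q * sqrt (z - y)" unfolding Q_def by simp
          then have "(E * ey) * Q \<le> (E * ey) * (h * (z - y) - q * sqrt (z - y))" using E0 ey0 by (simp add: mult_left_mono)
          also have "\<dots> = G (z - y)" unfolding G_def ex by (simp add: mult_ac)
          also have "\<dots> \<le> sL (z - y)" by (rule sL_G[OF zy])
          finally show "J2 y * ((E * ey) * Q) \<le> J2 y * sL (z - y)" using J2(1)[of y] by (simp add: mult_left_mono)
        qed
      qed
      also have "(LINT y|lborel. A * (J2 y * exp (lam1 * y)) + B * (J2 y * y * exp (lam1 * y)) + C * (J2 y * y\<^sup>2 * exp (lam1 * y)))
          = A * I2 + B * M1 + C * M2"
        unfolding I2_def Imom_def M1_def M2_def by (rule lin3[OF f1 f2 f3])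
      finally have N: "Nop J2 sL z \<ge> A * I2 + B * M1 + C * M2 - A" unfolding Nop_def sz by simp
      have t1: "d * Nop J2 sL z \<ge> d * (A * I2 + B * M1 + C * M2 - A)"
        using N d by (simp add: mult_left_mono)
      have t3: "s * deriv sL z = s * ((h - q / (2 * sq) - lam1 * (h * z - q * sq)) * E)" unfolding dz by simp
      have "A / pL z \<le> A / (1/2)" using pL_half[of z] A0 by (intro divide_left_mono) auto
      then have "A * (A / pL z) \<le> A * (2 * A)" using A0 by (intro mult_left_mono) auto
      then have "b * (A * (A / pL z)) \<le> b * (A * (2 * A))" using mult_left_mono b less_imp_le by blast
      moreover have "b * sL z * (1 - sL z / pL z) = b * A - b * (A * (A / pL z))" unfolding sz by (simp add: algebra_simps)
      moreover have "b * (A * (2 * A)) = 2 * b * (A * A)" by simp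
      ultimately have t2: "b * sL z * (1 - sL z / pL z) \<ge> b * A - 2 * b * (A * A)" by linarith
      have id: "d * (A * I2 + B * M1 + C * M2 - A) + s * ((h - q / (2 * sq) - lam1 * (h * z - q * sq)) * E) + b * A
          = A * (d * (I2 - 1) - s * lam1 + b) + B * (d * M1 - s) + d * C * M2"
        unfolding A_def B_def using sq0 by (simp add: field_simps)
      have "d * (I2 - 1) - s * lam1 + b = 0" using slam by simp
      then have e0: "d * (A * I2 + B * M1 + C * M2 - A) + s * ((h - q / (2 * sq) - lam1 * (h * z - q * sq)) * E) + b * A
          = d * C * M2" unfolding id dM1 by simp
      have Ale: "A \<le> h * z * E" unfolding A_def using E0 q(1) sq0 by (simp add: algebra_simps)
      have "A * A \<le> (h * z * E) * (h * z * E)" using A0 Ale by (intro mult_mono) auto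
      then have "2 * b * (A * A) \<le> 2 * b * ((h * z * E) * (h * z * E))" using b by simp
      also have "\<dots> \<le> d * C * M2"
      proof -
        have qk: "16 * b * h\<^sup>2 * (z\<^sup>2 * c3 * E) \<le> q * (d * M2)" using qkey[OF z0] unfolding c3_def E_def .
        have "16 * b * h\<^sup>2 * (z\<^sup>2 * c3 * E) * (E / (8 * c3)) \<le> q * (d * M2) * (E / (8 * c3))"
          using qk E0 c30 by (intro mult_right_mono) auto
        moreover have "16 * b * h\<^sup>2 * (z\<^sup>2 * c3 * E) * (E / (8 * c3)) = 2 * b * ((h * z * E) * (h * z * E))"
          using c30 by (simp add: field_simps power2_eq_square)
        moreover have "q * (d * M2) * (E / (8 * c3)) = d * C * M2" unfolding C_def using c30 by (simp add: field_simps)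
        ultimately show ?thesis by simp
      qed
      finally show ?thesis using t1 t2 t3 e0 by linarith
    qed
    show ?thesis using dpU dsU dpL dsL ineq1 ineq2 ineq3 ineq4 by blast
  qed
  have "upper_lower_pair J1 J2 a b d s pU sU pL sL"
    unfolding upper_lower_pair_def
  proof (intro conjI allI)
    show "\<exists>E. finite E \<and> (\<forall>z. z \<notin> E \<longrightarrow>
        pU differentiable at z \<and> sU differentiable at z \<and>
        pL differentiable at z \<and> sL differentiable at z \<and>
        Nop J1 pU z + s * deriv pU z + a * pU z * (1 - pU z) - sL z \<le> 0 \<and>
        d * Nop J2 sU z + s * deriv sU z + b * sU z * (1 - sU z / pU z) \<le> 0 \<and>
        Nop J1 pL z + s * deriv pL z + a * pL z * (1 - pL z) - sU z \<ge> 0 \<and>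
        d * Nop J2 sL z + s * deriv sL z + b * sL z * (1 - sL z / pL z) \<ge> 0)"
      by (rule exI[of _ "{0, z2, z3, z4}"]) (use main in auto)
  qed (use cpU csU cpL csL pU_pos sU_pos pL_pos sL_pos pL_le_pU sL_le_sU in auto)
  then show ?thesis unfolding pU_def sU_def pL_def sL_def .
qed

end
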